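(* Let $p$ be a prime and $f,g\in\mathbb{Z}[x]$ monic with nonzero resultant $r$. Then $$v_p(r)\ \ge\ \int_0^\infty\sum_{m=1}^{p^{\lceil t\rceil}}\chi_t^{(f)}(m)\,\chi_t^{(g)}(m)\,dt.$$
   Context: $v_p$ is the $p$-adic valuation, extended to an algebraic closure $\overline{\mathbb{Q}_p}$. For a monic $h\in\overline{\mathbb{Q}_p}[x]$ with factorization $h=\prod_i(x-\delta_i)$ (roots with multiplicity), $m\in\mathbb{Z}_p$ and real $t\ge0$, define $\chi_t^{(h)}(m)=\#\{i: v_p(m-\delta_i)\ge t\}$. The resultant of monic $f=\prod_i(x-\alpha_i)$, $g=\prod_j(x-\beta_j)$ is $r=\prod_{i,j}(\alpha_i-\beta_j)$. *)

theory Defs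
  imports "HOL-Analysis.Analysis" "HOL-Library.Multiset"
    "HOL-Computational_Algebra.Computational_Algebra"
    "Subresultants.Resultant_Prelim"
begin

text \<open>An extension of the p-adic valuation v_p (on the integers) to a field K,
  with values in the extended reals (v 0 = infinity).  The algebraic closure of
  Q_p with its valuation is an instance.\<close>
definition padic_val_ext :: "nat \<Rightarrow> ('a :: field \<Rightarrow> ereal) \<Rightarrow> bool" where
  "padic_val_ext p v \<longleftrightarrow>
     (\<forall>x. v x = \<infinity> \<longleftrightarrow> x = 0) \<and>
     (\<forall>x. v x \<noteq> -\<infinity>) \<and>
     (\<forall>x y. v (x * y) = v x + v y) \<and>
     (\<forall>x y. v (x + y) \<ge> min (v x) (v y)) \<and>
     (\<forall>n::int. n \<noteq> 0 \<longrightarrow> v (of_int n) = ereal (real (multiplicity (int p) n)))"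

text \<open>chi_t^(h)(m) = number of roots delta (with multiplicity, given as the multiset R
  of roots of h) with v(m - delta) \<ge> t.\<close>
definition chi :: "('a :: field \<Rightarrow> ereal) \<Rightarrow> 'a multiset \<Rightarrow> real \<Rightarrow> int \<Rightarrow> nat" where
  "chi v R t m = size (filter_mset (\<lambda>\<delta>. v (of_int m - \<delta>) \<ge> ereal t) R)"

end

theory Submission
  imports Defs "Subresultants.Subresultant"
begin


lemma res_euclid:
  fixes G F :: "'a :: field poly"
  assumes mon: "lead_coeff G = 1" and dg: "degree G > 0" and dgf: "degree G \<le> degree F"
  shows "resultant G F = resultant G (F mod G)"
proof -
  define H where "H = F mod G"
  define B where "B = - (F div G)"
  have FGH: "F + B * G = H" unfolding H_def B_def
    by (metis add_diff_cancel_left' div_mult_mod_eq diff_conv_add_uminus mult_minus_left add.commute)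
  have G0: "G \<noteq> 0" using dg by auto
  have dh: "degree H < degree G \<or> H = 0" unfolding H_def using degree_mod_less[OF G0] by auto
  hence ch: "degree G > degree H" using dg by auto
  have sw: "resultant G F = (-1)^(degree G * degree F) * resultant F G" by (rule resultant_swap)
  have "resultant F G = (-1)^(degree F * degree G) * resultant G H"
  proof (cases "degree H > 0")
    case True
    from BT_lemma_1_12[OF FGH dgf, of 0] ch True
    have "subresultant 0 F G = Polynomial.smult ((-1)^(degree F * degree G) * lead_coeff G ^ (degree F - degree H)) (subresultant 0 G H)"
      by simp
    from arg_cong[OF this, of "\<lambda>x. coeff x 0"] show ?thesis
      by (simp add: subresultant_resultant mon)
  next
    case False
    hence d0: "degree H = 0" by simp
    from BT_lemma_1_13'[OF FGH dgf, of 0] ch d0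
    have "subresultant 0 F G = Polynomial.smult ((-1)^(degree F * degree G) * lead_coeff G ^ (degree F) * lead_coeff H ^ (degree G - 1)) H"
      by simp
    from arg_cong[OF this, of "\<lambda>x. coeff x 0"] 
    have "resultant F G = (-1)^(degree F * degree G) * (coeff H 0 ^ (degree G - 1) * coeff H 0)"
      using d0 by (simp add: subresultant_resultant mon)
    also have "coeff H 0 ^ (degree G - 1) * coeff H 0 = coeff H 0 ^ degree G"
      using dg by (metis Suc_diff_1 power_Suc2)
    also have "\<dots> = resultant G H"
      using d0 by (metis degree_0_id resultant_const(2))
    finally show ?thesis .
  qed
  with sw show ?thesis unfolding H_def
    by (simp add: mult.commute flip: power_add)
qed

lemma lin_prod_props:
  fixes B :: "'a :: field multiset"
  shows "degree (\<Prod>\<beta>\<in>#B. [:-\<beta>,1:]) = size B \<and> lead_coeff (\<Prod>\<beta>\<in>#B. [:-\<beta>,1:]) = 1"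
proof (induction B)
  case empty then show ?case by simp
next
  case (add x B)
  have nz: "(\<Prod>\<beta>\<in>#B. [:-\<beta>,1:]) \<noteq> 0" using add by auto
  have e: "(\<Prod>\<beta>\<in>#add_mset x B. [:-\<beta>,1:]) = [:-x,1:] * (\<Prod>\<beta>\<in>#B. [:-\<beta>,1:])" by simp
  have d: "degree ([:-x,1:] * (\<Prod>\<beta>\<in>#B. [:-\<beta>,1:])) = degree [:-x,1:] + degree (\<Prod>\<beta>\<in>#B. [:-\<beta>,1:])"
    by (rule degree_mult_eq) (use nz in auto)
  have l: "lead_coeff ([:-x,1:] * (\<Prod>\<beta>\<in>#B. [:-\<beta>,1:])) = lead_coeff [:-x,1:] * lead_coeff (\<Prod>\<beta>\<in>#B. [:-\<beta>,1:])"
    by (rule lead_coeff_mult)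
  show ?case unfolding e d l using add by (auto simp: coeff_eq_0)
qed

lemma prod_mset_swap:
  fixes h :: "'b \<Rightarrow> 'c \<Rightarrow> 'a :: comm_monoid_mult"
  shows "(\<Prod>a\<in>#A. \<Prod>b\<in>#B. h a b) = (\<Prod>b\<in>#B. \<Prod>a\<in>#A. h a b)"
proof (induction A)
  case empty then show ?case by simp
next
  case (add x A)
  then show ?case by (simp add: prod_mset.distrib)
qed

lemma res_roots:
  fixes F :: "'a :: alg_closed_field poly"
  shows "resultant (\<Prod>\<beta>\<in>#B. [:-\<beta>,1:]) F = (\<Prod>\<beta>\<in>#B. poly F \<beta>)"
proof (induction "size B + degree F" arbitrary: B F rule: less_induct)
  case less
  define G where "G = (\<Prod>\<beta>\<in>#B. [:-\<beta>,1:])"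
  have monG: "lead_coeff G = 1" and degG: "degree G = size B"
    using lin_prod_props[of B] unfolding G_def by auto
  have rootG: "\<beta> \<in># B \<Longrightarrow> poly G \<beta> = 0" for \<beta>
    unfolding G_def poly_prod_mset prod_mset_zero_iff by force
  have "resultant G F = (\<Prod>\<beta>\<in>#B. poly F \<beta>)"
  proof (cases "B = {#}")
    case True then show ?thesis unfolding G_def by simp
  next
    case Bne: False
    hence dg: "degree G > 0" using degG by (simp add: nonempty_has_size)
    show ?thesis
    proof (cases "F = 0")
      case True
      from Bne obtain b where "b \<in># B" by blast
      then show ?thesis using True dg degG by (auto simp: prod_mset_zero_iff)
    next
      case F0: False
      show ?thesis
      proof (cases "degree G \<le> degree F")
        case True
        have "resultant G F = resultant G (F mod G)" by (rule res_euclid[OF monG dg True])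
        also have "\<dots> = (\<Prod>\<beta>\<in>#B. poly (F mod G) \<beta>)"
        proof -
          have "degree (F mod G) < degree F"
            using degree_mod_less[of G F] dg True by (cases "F mod G = 0") force+
          hence "size B + degree (F mod G) < size B + degree F" by simp
          from less[OF this] show ?thesis unfolding G_def by simp
        qed
        also have "\<dots> = (\<Prod>\<beta>\<in>#B. poly F \<beta>)"
        proof (rule arg_cong[where f=prod_mset], rule image_mset_cong)
          fix \<beta> assume "\<beta> \<in># B"
          hence "poly G \<beta> = 0" by (rule rootG)
          moreover have "F = (F div G) * G + F mod G" by simp
          hence "poly F \<beta> = poly (F div G) \<beta> * poly G \<beta> + poly (F mod G) \<beta>"
            by (metis poly_add poly_mult)
          ultimately show "poly (F mod G) \<beta> = poly F \<beta>" by simp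
        qed
        finally show ?thesis .
      next
        case False
        hence lt: "degree F < degree G" by simp
        show ?thesis
        proof (cases "degree F = 0")
          case True
          then obtain c where Fc: "F = [:c:]" by (metis degree_0_id)
          show ?thesis unfolding Fc using degG by simp
        next
          case df: False
          define c where "c = lead_coeff F"
          have c0: "c \<noteq> 0" using F0 c_def by simp
          obtain A where A: "size A = degree F" "F = Polynomial.smult c (\<Prod>x\<in>#A. [:-x, 1:])"
            using alg_closed_imp_factorization[OF F0] c_def by blast
          define F1 where "F1 = (\<Prod>x\<in>#A. [:-x, 1:])"
          have monF1: "lead_coeff F1 = 1" and degF1: "degree F1 = size A"
            using lin_prod_props[of A] unfolding F1_def by auto
          have rootF1: "\<alpha> \<in># A \<Longrightarrow> poly F1 \<alpha> = 0" for \<alpha>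
            unfolding F1_def poly_prod_mset prod_mset_zero_iff by force
          have FF1: "F = Polynomial.smult c F1" using A F1_def by simp
          have dF1: "degree F1 > 0" using degF1 A df by simp
          have "resultant G F = (-1)^(degree G * degree F) * resultant F G" by (rule resultant_swap)
          also have "resultant F G = c ^ degree G * resultant F1 G"
            unfolding FF1 by (rule resultant_smult_left[OF c0])
          also have "resultant F1 G = resultant F1 (G mod F1)"
            by (rule res_euclid[OF monF1 dF1]) (use degF1 A lt in simp)
          also have "\<dots> = (\<Prod>\<alpha>\<in>#A. poly (G mod F1) \<alpha>)"
          proof -
            have "degree (G mod F1) < degree F1"
              using degree_mod_less[of F1 G] dF1 by (cases "G mod F1 = 0") force+
            hence "size A + degree (G mod F1) < size B + degree F" using degF1 A degG lt by simp
            from less[OF this] show ?thesis unfolding F1_def by simp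
          qed
          also have "\<dots> = (\<Prod>\<alpha>\<in>#A. poly G \<alpha>)"
          proof (rule arg_cong[where f=prod_mset], rule image_mset_cong)
            fix \<alpha> assume "\<alpha> \<in># A"
            hence "poly F1 \<alpha> = 0" by (rule rootF1)
            moreover have "G = (G div F1) * F1 + G mod F1" by simp
            hence "poly G \<alpha> = poly (G div F1) \<alpha> * poly F1 \<alpha> + poly (G mod F1) \<alpha>"
              by (metis poly_add poly_mult)
            ultimately show "poly (G mod F1) \<alpha> = poly G \<alpha>" by simp
          qed
          also have "\<dots> = (\<Prod>\<alpha>\<in>#A. \<Prod>\<beta>\<in>#B. (\<alpha> - \<beta>))"
            unfolding G_def poly_prod_mset by simp
          also have "\<dots> = (\<Prod>\<alpha>\<in>#A. (-1)^size B * (\<Prod>\<beta>\<in>#B. (\<beta> - \<alpha>)))"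
          proof (rule arg_cong[where f=prod_mset], rule image_mset_cong)
            fix \<alpha>
            show "(\<Prod>\<beta>\<in>#B. \<alpha> - \<beta>) = (-1)^size B * (\<Prod>\<beta>\<in>#B. (\<beta> - \<alpha>))"
              by (induction B) (auto simp: algebra_simps)
          qed
          also have "\<dots> = (-1)^(size B * size A) * (\<Prod>\<alpha>\<in>#A. \<Prod>\<beta>\<in>#B. (\<beta> - \<alpha>))"
            by (simp add: prod_mset.distrib power_mult)
          also have "(\<Prod>\<alpha>\<in>#A. \<Prod>\<beta>\<in>#B. (\<beta> - \<alpha>)) = (\<Prod>\<beta>\<in>#B. \<Prod>\<alpha>\<in>#A. (\<beta> - \<alpha>))"
            by (rule prod_mset_swap)
          also have "(\<Prod>\<beta>\<in>#B. \<Prod>\<alpha>\<in>#A. (\<beta> - \<alpha>)) = (\<Prod>\<beta>\<in>#B. poly F1 \<beta>)"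
            unfolding F1_def poly_prod_mset by simp
          finally have "resultant G F = (-1)^(degree G * degree F) * (c ^ degree G *
               ((-1)^(size B * size A) * (\<Prod>\<beta>\<in>#B. poly F1 \<beta>)))" .
          also have "\<dots> = c ^ size B * (\<Prod>\<beta>\<in>#B. poly F1 \<beta>)"
            using degG A(1) by (simp add: power_add[symmetric] flip: mult.assoc)
          also have "\<dots> = (\<Prod>\<beta>\<in>#B. poly F \<beta>)"
            unfolding FF1 by (simp add: prod_mset.distrib)
          finally show ?thesis .
        qed
      qed
    qed
  qed
  thus ?case unfolding G_def .
qed



lemma pv_zero: "padic_val_ext p v \<Longrightarrow> v 0 = \<infinity>"
  unfolding padic_val_ext_def by blast
lemma pv_fin: "padic_val_ext p v \<Longrightarrow> x \<noteq> 0 \<Longrightarrow> \<exists>w. v x = ereal w"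
  unfolding padic_val_ext_def by (metis ereal_cases)
lemma pv_mult: "padic_val_ext p v \<Longrightarrow> v (x * y) = v x + v y"
  unfolding padic_val_ext_def by blast
lemma pv_add: "padic_val_ext p v \<Longrightarrow> v (x + y) \<ge> min (v x) (v y)"
  unfolding padic_val_ext_def by blast
lemma pv_ofint: "padic_val_ext p v \<Longrightarrow> n \<noteq> 0 \<Longrightarrow> v (of_int n) = ereal (real (multiplicity (int p) n))"
  unfolding padic_val_ext_def by blast
lemma pv_one: "padic_val_ext p v \<Longrightarrow> v 1 = 0"
  using pv_ofint[of p v 1] by (simp add: zero_ereal_def)
lemma pv_m1: "padic_val_ext p v \<Longrightarrow> v (-1) = 0"
  using pv_ofint[of p v "-1"] by (simp add: zero_ereal_def)
lemma pv_uminus: "padic_val_ext p v \<Longrightarrow> v (- x) = v x"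
  using pv_mult[of p v "-1" x] pv_m1[of p v] by simp
lemma pv_diff: "padic_val_ext p v \<Longrightarrow> v (x - y) \<ge> min (v x) (v y)"
  using pv_add[of p v x "-y"] pv_uminus[of p v y] by simp
lemma pv_int_nonneg: "padic_val_ext p v \<Longrightarrow> v (of_int n) \<ge> 0"
  using pv_ofint[of p v n] pv_zero[of p v] by (cases "n = 0") auto
lemma pv_sum:
  assumes "padic_val_ext p v" "finite S" "\<And>k. k \<in> S \<Longrightarrow> c \<le> v (f k)"
  shows "c \<le> v (sum f S)"
  using assms(2,3)
proof (induction S rule: finite_induct)
  case empty then show ?case using pv_zero[OF assms(1)] by simp
next
  case (insert x F)
  have "c \<le> min (v (f x)) (v (sum f F))" using insert by simp
  also have "\<dots> \<le> v (f x + sum f F)" by (rule pv_add[OF assms(1)])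
  finally show ?case using insert by simp
qed
lemma pv_pow:
  assumes "padic_val_ext p v" "v x = ereal w"
  shows "v (x ^ k) = ereal (real k * w)"
proof (induction k)
  case 0 then show ?case using pv_one[OF assms(1)] by (simp add: zero_ereal_def)
next
  case (Suc k) then show ?case using pv_mult[OF assms(1), of x "x^k"] assms(2)
    by (simp add: algebra_simps)
qed
lemma pv_prod_mset:
  assumes "padic_val_ext p v"
  shows "v (\<Prod>x\<in>#A. h x) = (\<Sum>x\<in>#A. v (h x))"
proof (induction A)
  case empty then show ?case using pv_one[OF assms] by simp
next
  case (add x A) then show ?case using pv_mult[OF assms] by simp
qed

lemma pv_integral:
  fixes F :: "'a :: field poly"
  assumes pv: "padic_val_ext p v" and lc: "lead_coeff F = 1"
    and co: "\<And>k. \<exists>c. coeff F k = of_int c" and rt: "poly F \<alpha> = 0"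
  shows "v \<alpha> \<ge> 0"
proof (rule ccontr)
  assume neg: "\<not> v \<alpha> \<ge> 0"
  have a0: "\<alpha> \<noteq> 0" using neg pv_zero[OF pv] by auto
  obtain w where w: "v \<alpha> = ereal w" using pv_fin[OF pv a0] by blast
  have wn: "w < 0" using neg w by simp
  define n where "n = degree F"
  have n0: "n > 0"
  proof (rule ccontr)
    assume "\<not> n > 0"
    hence "degree F = 0" using n_def by simp
    then obtain c where "F = [:c:]" by (metis degree_0_id)
    with lc rt show False by simp
  qed
  have "0 = poly F \<alpha>" using rt by simp
  also have "\<dots> = (\<Sum>k\<le>n. coeff F k * \<alpha> ^ k)" unfolding n_def by (rule poly_altdef)
  also have "\<dots> = (\<Sum>k<n. coeff F k * \<alpha> ^ k) + \<alpha> ^ n"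
    using lc n_def by (simp add: lessThan_Suc_atMost[symmetric])
  finally have eq: "(\<Sum>k<n. coeff F k * \<alpha> ^ k) = - (\<alpha> ^ n)"
    by (simp add: eq_neg_iff_add_eq_0)
  have "ereal (real (n - 1) * w) \<le> v (\<Sum>k<n. coeff F k * \<alpha> ^ k)"
  proof (rule pv_sum[OF pv])
    show "finite {..<n}" by simp
  next
    fix k assume "k \<in> {..<n}"
    hence k: "k < n" by simp
    obtain c where c: "coeff F k = of_int c" using co by blast
    have "ereal (real (n - 1) * w) \<le> ereal (real k * w)"
      using k wn by (simp add: mult_right_mono_neg)
    also have "\<dots> \<le> v (coeff F k) + ereal (real k * w)"
      using pv_int_nonneg[OF pv, of c] c by (simp add: add_increasing)
    also have "\<dots> = v (coeff F k * \<alpha> ^ k)"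
      using pv_mult[OF pv] pv_pow[OF pv w] by simp
    finally show "ereal (real (n - 1) * w) \<le> v (coeff F k * \<alpha> ^ k)" .
  qed
  also have "\<dots> = ereal (real n * w)"
    unfolding eq pv_uminus[OF pv] by (rule pv_pow[OF pv w])
  finally have "real (n - 1) * w \<le> real n * w" by simp
  with wn n0 show False by (simp add: of_nat_diff algebra_simps)
qed



lemma unique_m:
  assumes pv: "padic_val_ext p v" and pr: "prime p"
    and h1: "ereal t \<le> v (of_int m - a)" and h2: "ereal t \<le> v (of_int m' - a)"
    and m: "m \<in> {1..int p ^ nat \<lceil>t\<rceil>}" and m': "m' \<in> {1..int p ^ nat \<lceil>t\<rceil>}"
  shows "m = m'"
proof (rule ccontr)
  assume ne: "m \<noteq> m'"
  have "of_int (m - m') = (of_int m - a) - (of_int m' - a)" by simp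
  hence "v (of_int (m - m')) \<ge> min (v (of_int m - a)) (v (of_int m' - a))"
    using pv_diff[OF pv] by metis
  hence "ereal t \<le> v (of_int (m - m'))" using h1 h2 by (simp add: min_def split: if_splits)
  hence tm: "t \<le> real (multiplicity (int p) (m - m'))" using pv_ofint[OF pv, of "m - m'"] ne by simp
  have "nat \<lceil>t\<rceil> \<le> multiplicity (int p) (m - m')" using tm by simp
  hence dv: "int p ^ nat \<lceil>t\<rceil> dvd (m - m')" by (rule multiplicity_dvd')
  have "\<bar>int p ^ nat \<lceil>t\<rceil>\<bar> \<le> \<bar>m - m'\<bar>" using dvd_imp_le_int[OF _ dv] ne by simp
  moreover have "\<bar>m - m'\<bar> < int p ^ nat \<lceil>t\<rceil>" using m m' by auto
  ultimately show False by simp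
qed

lemma card_bound:
  assumes pv: "padic_val_ext p v" and pr: "prime p" and t: "t \<ge> 0"
    and d: "v (a - b) = ereal d"
  shows "real (card {m \<in> {1..int p ^ nat \<lceil>t\<rceil>}. ereal t \<le> v (of_int m - a) \<and> ereal t \<le> v (of_int m - b)})
     \<le> indicator {0..d} t"
    (is "real (card ?S) \<le> _")
proof (cases "?S = {}")
  case True
  hence "card ?S = 0" by (simp only: card.empty)
  then show ?thesis by simp
next
  case False
  then obtain m where m: "m \<in> ?S" by blast
  have "a - b = (of_int m - b) - (of_int m - a)" by simp
  hence "v (a - b) \<ge> min (v (of_int m - b)) (v (of_int m - a))" using pv_diff[OF pv] by metis
  hence "ereal t \<le> v (a - b)" using m by (simp add: min_def split: if_splits)
  hence td: "t \<le> d" using d by simp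
  have fin: "finite ?S" by (rule finite_subset[OF _ finite_atLeastAtMost_int]) auto
  have "card ?S \<le> Suc 0"
    by (subst card_le_Suc0_iff_eq[OF fin]) (auto intro: unique_m[OF pv pr])
  then show ?thesis using td t by (simp add: indicator_def)
qed

lemma chi_eq:
  "real (chi v (mset zs) t m) = (\<Sum>i<length zs. if ereal t \<le> v (of_int m - zs!i) then 1 else 0)"
proof -
  have "chi v (mset zs) t m = length (filter (\<lambda>\<delta>. ereal t \<le> v (of_int m - \<delta>)) zs)"
    unfolding chi_def by (metis mset_filter size_mset)
  also have "\<dots> = card {i. i < length zs \<and> ereal t \<le> v (of_int m - zs!i)}"
    by (rule length_filter_conv_card)
  also have "{i. i < length zs \<and> ereal t \<le> v (of_int m - zs!i)} = {i\<in>{..<length zs}. ereal t \<le> v (of_int m - zs!i)}"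
    by auto
  finally have "real (chi v (mset zs) t m) = (\<Sum>i\<in>{i\<in>{..<length zs}. ereal t \<le> v (of_int m - zs!i)}. 1)"
    by simp
  also have "\<dots> = (\<Sum>i<length zs. if ereal t \<le> v (of_int m - zs!i) then 1 else 0)"
    by (rule sum.inter_filter) simp
  finally show ?thesis .
qed

lemma pointwise:
  assumes pv: "padic_val_ext p v" and pr: "prime p" and t: "t \<ge> 0"
    and d: "\<And>i j. i < length xs \<Longrightarrow> j < length ys \<Longrightarrow> v (xs!i - ys!j) = ereal (d i j)"
  shows "real (\<Sum>m = 1..int p ^ nat \<lceil>t\<rceil>. chi v (mset xs) t m * chi v (mset ys) t m)
    \<le> (\<Sum>i<length xs. \<Sum>j<length ys. indicator {0..d i j} t)"
proof -
  define N where "N = int p ^ nat \<lceil>t\<rceil>"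
  define P where "P = (\<lambda>i m. ereal t \<le> v (of_int m - xs!i))"
  define Q where "Q = (\<lambda>j m. ereal t \<le> v (of_int m - ys!j))"
  have "real (\<Sum>m = 1..N. chi v (mset xs) t m * chi v (mset ys) t m)
      = (\<Sum>m = 1..N. real (chi v (mset xs) t m) * real (chi v (mset ys) t m))" by simp
  also have "\<dots> = (\<Sum>m = 1..N. \<Sum>i<length xs. \<Sum>j<length ys. (if P i m then 1 else 0) * (if Q j m then 1 else 0))"
    unfolding chi_eq P_def Q_def sum_product by simp
  also have "\<dots> = (\<Sum>i<length xs. \<Sum>j<length ys. \<Sum>m = 1..N. (if P i m then 1 else 0) * (if Q j m then 1 else 0))"
    by (subst sum.swap) (simp add: sum.swap[of _ "{1..N}"])
  also have "\<dots> = (\<Sum>i<length xs. \<Sum>j<length ys. real (card {m \<in> {1..N}. P i m \<and> Q j m}))"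
  proof (intro sum.cong refl)
    fix i j
    have "(\<Sum>m = 1..N. (if P i m then 1 else 0) * (if Q j m then 1 else 0) :: real)
        = (\<Sum>m = 1..N. if P i m \<and> Q j m then 1 else 0)" by (intro sum.cong) auto
    also have "\<dots> = (\<Sum>m\<in>{m \<in> {1..N}. P i m \<and> Q j m}. 1)"
      by (rule sum.inter_filter[symmetric]) simp
    finally show "(\<Sum>m = 1..N. (if P i m then 1 else 0) * (if Q j m then 1 else 0) :: real)
        = real (card {m \<in> {1..N}. P i m \<and> Q j m})" by simp
  qed
  also have "\<dots> \<le> (\<Sum>i<length xs. \<Sum>j<length ys. indicator {0..d i j} t)"
  proof (intro sum_mono)
    fix i j assume "i \<in> {..<length xs}" "j \<in> {..<length ys}"
    then show "real (card {m \<in> {1..N}. P i m \<and> Q j m}) \<le> indicator {0..d i j} t"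
      unfolding N_def P_def Q_def using card_bound[OF pv pr t d] by simp
  qed
  finally show ?thesis unfolding N_def .
qed



lemma sum_mset_nth: "(\<Sum>x\<in>#mset xs. h x) = (\<Sum>i<length xs. h (xs!i))"
proof (induction xs)
  case Nil then show ?case by simp
next
  case (Cons a xs)
  have "(\<Sum>i<length (a#xs). h ((a#xs)!i)) = h a + (\<Sum>i<length xs. h (xs!i))"
    by (simp only: length_Cons sum.lessThan_Suc_shift) simp
  then show ?case using Cons by simp
qed

theorem mainTheorem12:
  fixes p :: nat and f g :: "int poly" and v :: "'a :: alg_closed_field \<Rightarrow> ereal"
    and Rf Rg :: "'a multiset"
  assumes "prime p"
    and "monic f" and "monic g"
    and "resultant f g \<noteq> 0"
    and "padic_val_ext p v"
    and "map_poly of_int f = (\<Prod>\<alpha>\<in>#Rf. [:-\<alpha>, 1:])"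
    and "map_poly of_int g = (\<Prod>\<beta>\<in>#Rg. [:-\<beta>, 1:])"
  shows "ennreal (real (multiplicity (int p) (resultant f g)))
     \<ge> (\<integral>\<^sup>+ t\<in>{0..}. ennreal (real (\<Sum>m = 1..int p ^ nat \<lceil>t\<rceil>.
            chi v Rf t m * chi v Rg t m)) \<partial>lborel)"
proof -
  note pv = assms(5) and pr = assms(1)
  define F :: "'a poly" where "F = map_poly of_int f"
  define G :: "'a poly" where "G = map_poly of_int g"
  define r where "r = resultant f g"
  have cF: "coeff F k = of_int (coeff f k)" for k unfolding F_def by (simp add: coeff_map_poly)
  have cG: "coeff G k = of_int (coeff g k)" for k unfolding G_def by (simp add: coeff_map_poly)
  have degF: "degree F = degree f"
  proof (rule antisym)
    show "degree F \<le> degree f" unfolding F_def by (rule degree_map_poly_le)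
    have "coeff F (degree f) \<noteq> 0" using cF assms(2) by simp
    thus "degree f \<le> degree F" by (rule le_degree)
  qed
  have degG: "degree G = degree g"
  proof (rule antisym)
    show "degree G \<le> degree g" unfolding G_def by (rule degree_map_poly_le)
    have "coeff G (degree g) \<noteq> 0" using cG assms(3) by simp
    thus "degree g \<le> degree G" by (rule le_degree)
  qed
  have lcF: "lead_coeff F = 1" using degF cF assms(2) by simp
  have lcG: "lead_coeff G = 1" using degG cG assms(3) by simp
  have "of_int r = resultant F G"
    unfolding r_def F_def G_def
    by (rule of_int_hom.resultant_map_poly[symmetric]) (use degF degG F_def G_def in auto)
  also have "\<dots> = (\<Prod>\<alpha>\<in>#Rf. poly G \<alpha>)"
    unfolding F_def assms(6) by (rule res_roots)
  also have "\<dots> = (\<Prod>\<alpha>\<in>#Rf. \<Prod>\<beta>\<in>#Rg. (\<alpha> - \<beta>))"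
    unfolding G_def assms(7) poly_prod_mset by simp
  finally have rprod: "of_int r = (\<Prod>\<alpha>\<in>#Rf. \<Prod>\<beta>\<in>#Rg. (\<alpha> - \<beta>))" .
  have vr: "v (of_int r) = ereal (real (multiplicity (int p) r))"
    using pv_ofint[OF pv] assms(4) r_def by simp
  have vsum: "v (of_int r) = (\<Sum>\<alpha>\<in>#Rf. \<Sum>\<beta>\<in>#Rg. v (\<alpha> - \<beta>))"
    unfolding rprod pv_prod_mset[OF pv] by simp
  have intF: "v \<alpha> \<ge> 0" if "\<alpha> \<in># Rf" for \<alpha>
  proof (rule pv_integral[OF pv lcF])
    show "\<exists>c. coeff F k = of_int c" for k using cF by blast
    show "poly F \<alpha> = 0" unfolding F_def assms(6) poly_prod_mset prod_mset_zero_iff using that by force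
  qed
  have intG: "v \<beta> \<ge> 0" if "\<beta> \<in># Rg" for \<beta>
  proof (rule pv_integral[OF pv lcG])
    show "\<exists>c. coeff G k = of_int c" for k using cG by blast
    show "poly G \<beta> = 0" unfolding G_def assms(7) poly_prod_mset prod_mset_zero_iff using that by force
  qed
  have rne: "of_int r \<noteq> (0::'a)" using vr pv_zero[OF pv] by auto
  have dfin: "\<exists>d. v (\<alpha> - \<beta>) = ereal d \<and> d \<ge> 0" if "\<alpha> \<in># Rf" "\<beta> \<in># Rg" for \<alpha> \<beta>
  proof -
    have "\<alpha> - \<beta> \<noteq> 0"
    proof
      assume "\<alpha> - \<beta> = 0"
      hence "(\<Prod>\<beta>\<in>#Rg. (\<alpha> - \<beta>)) = 0" using that(2) by (force simp: prod_mset_zero_iff)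
      hence "(\<Prod>\<alpha>\<in>#Rf. \<Prod>\<beta>\<in>#Rg. (\<alpha> - \<beta>)) = 0" using that(1) by (force simp: prod_mset_zero_iff)
      with rne rprod show False by simp
    qed
    then obtain d where d: "v (\<alpha> - \<beta>) = ereal d" using pv_fin[OF pv] by blast
    have "min (v \<alpha>) (v \<beta>) \<le> v (\<alpha> - \<beta>)" by (rule pv_diff[OF pv])
    hence "0 \<le> v (\<alpha> - \<beta>)" using intF[OF that(1)] intG[OF that(2)] by (simp add: min_def split: if_splits)
    with d show ?thesis by auto
  qed
  obtain xs where xs: "mset xs = Rf" using ex_mset by blast
  obtain ys where ys: "mset ys = Rg" using ex_mset by blast
  define d where "d = (\<lambda>i j. real_of_ereal (v (xs!i - ys!j)))"
  have dprop: "v (xs!i - ys!j) = ereal (d i j) \<and> d i j \<ge> 0" if "i < length xs" "j < length ys" for i j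
  proof -
    have "xs!i \<in># Rf" "ys!j \<in># Rg" using that xs ys by (auto simp flip: xs ys)
    from dfin[OF this] show ?thesis unfolding d_def by auto
  qed
  have "ereal (real (multiplicity (int p) r)) = (\<Sum>i<length xs. \<Sum>j<length ys. v (xs!i - ys!j))"
    unfolding vr[symmetric] vsum xs[symmetric] ys[symmetric] sum_mset_nth by simp
  also have "\<dots> = (\<Sum>i<length xs. \<Sum>j<length ys. ereal (d i j))"
    using dprop by (intro sum.cong refl) auto
  also have "\<dots> = ereal (\<Sum>i<length xs. \<Sum>j<length ys. d i j)" by simp
  finally have mult_eq: "real (multiplicity (int p) r) = (\<Sum>i<length xs. \<Sum>j<length ys. d i j)" by simp
  have "(\<integral>\<^sup>+ t\<in>{0..}. ennreal (real (\<Sum>m = 1..int p ^ nat \<lceil>t\<rceil>.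
            chi v Rf t m * chi v Rg t m)) \<partial>lborel)
     \<le> (\<integral>\<^sup>+ t. (\<Sum>i<length xs. \<Sum>j<length ys. indicator {0..d i j} t) \<partial>lborel)"
  proof (rule nn_integral_mono)
    fix t :: real
    show "ennreal (real (\<Sum>m = 1..int p ^ nat \<lceil>t\<rceil>. chi v Rf t m * chi v Rg t m)) * indicator {0..} t
      \<le> (\<Sum>i<length xs. \<Sum>j<length ys. indicator {0..d i j} t)"
    proof (cases "t \<ge> 0")
      case True
      have "ennreal (real (\<Sum>m = 1..int p ^ nat \<lceil>t\<rceil>. chi v Rf t m * chi v Rg t m))
          \<le> ennreal (\<Sum>i<length xs. \<Sum>j<length ys. indicator {0..d i j} t)"
        unfolding xs[symmetric] ys[symmetric]
        by (rule ennreal_leI, rule pointwise[OF pv pr True]) (use dprop in auto)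
      also have "\<dots> = (\<Sum>i<length xs. \<Sum>j<length ys. indicator {0..d i j} t)"
        by (simp add: sum_nonneg flip: sum_ennreal ennreal_indicator)
      finally show ?thesis using True by simp
    qed simp
  qed
  also have "\<dots> = (\<Sum>i<length xs. \<Sum>j<length ys. \<integral>\<^sup>+ t. indicator {0..d i j} t \<partial>lborel)"
    by (simp add: nn_integral_sum)
  also have "\<dots> = (\<Sum>i<length xs. \<Sum>j<length ys. ennreal (d i j))"
    using dprop by (intro sum.cong refl) auto
  also have "\<dots> = (\<Sum>i<length xs. ennreal (\<Sum>j<length ys. d i j))"
    by (intro sum.cong refl, rule sum_ennreal) (use dprop in auto)
  also have "\<dots> = ennreal (\<Sum>i<length xs. \<Sum>j<length ys. d i j)"
    by (rule sum_ennreal) (use dprop in \<open>auto intro: sum_nonneg\<close>)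
  also have "\<dots> = ennreal (real (multiplicity (int p) (resultant f g)))"
    using mult_eq r_def by simp
  finally show ?thesis .
qed

end
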